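(* Let $(A,\cdot)$ be a nearly associative algebra over a field $\mathbb{K}$ of characteristic $0$. Then $(A,\cdot)$ is Lie-admissible, i.e. $(A,[\cdot,\cdot])$ with $[x,y]=x\cdot y-y\cdot x$ is a Lie algebra.
   Context: An algebra $(A,\cdot)$ is a linear space $A$ over $\mathbb{K}$ with a bilinear product $\cdot:A\times A\to A$. It is called nearly associative if $x\cdot(y\cdot z)=(z\cdot x)\cdot y$ for all $x,y,z\in A$. An algebra is Lie-admissible if the commutator bracket $[x,y]=x\cdot y-y\cdot x$ makes $A$ a Lie algebra. *)

theory Defs
  imports "HOL.Vector_Spaces"
begin

definition bilinear_product ::
  "('k::field \<Rightarrow> 'a::ab_group_add \<Rightarrow> 'a) \<Rightarrow> ('a \<Rightarrow> 'a \<Rightarrow> 'a) \<Rightarrow> bool" where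
  "bilinear_product scale p \<longleftrightarrow>
     (\<forall>x y z. p (x + y) z = p x z + p y z) \<and>
     (\<forall>x y z. p x (y + z) = p x y + p x z) \<and>
     (\<forall>c x y. p (scale c x) y = scale c (p x y)) \<and>
     (\<forall>c x y. p x (scale c y) = scale c (p x y))"

definition algebra_over ::
  "('k::field \<Rightarrow> 'a::ab_group_add \<Rightarrow> 'a) \<Rightarrow> ('a \<Rightarrow> 'a \<Rightarrow> 'a) \<Rightarrow> bool" where
  "algebra_over scale p \<longleftrightarrow> vector_space scale \<and> bilinear_product scale p"

definition nearly_associative :: "('a \<Rightarrow> 'a \<Rightarrow> 'a) \<Rightarrow> bool" where
  "nearly_associative p \<longleftrightarrow> (\<forall>x y z. p x (p y z) = p (p z x) y)"

definition lie_algebra ::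
  "('k::field \<Rightarrow> 'a::ab_group_add \<Rightarrow> 'a) \<Rightarrow> ('a \<Rightarrow> 'a \<Rightarrow> 'a) \<Rightarrow> bool" where
  "lie_algebra scale b \<longleftrightarrow>
     vector_space scale \<and> bilinear_product scale b \<and>
     (\<forall>x. b x x = 0) \<and>
     (\<forall>x y z. b x (b y z) + b y (b z x) + b z (b x y) = 0)"

definition commutator :: "('a::ab_group_add \<Rightarrow> 'a \<Rightarrow> 'a) \<Rightarrow> 'a \<Rightarrow> 'a \<Rightarrow> 'a" where
  "commutator p x y = p x y - p y x"

definition lie_admissible ::
  "('k::field \<Rightarrow> 'a::ab_group_add \<Rightarrow> 'a) \<Rightarrow> ('a \<Rightarrow> 'a \<Rightarrow> 'a) \<Rightarrow> bool" where
  "lie_admissible scale p \<longleftrightarrow> lie_algebra scale (commutator p)"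

end

theory Submission
  imports Defs
begin

theorem mainTheorem1:
  fixes scale :: "'k::field_char_0 \<Rightarrow> 'a::ab_group_add \<Rightarrow> 'a"
    and p :: "'a \<Rightarrow> 'a \<Rightarrow> 'a"
  assumes "algebra_over scale p"
    and "nearly_associative p"
  shows "lie_admissible scale p"
proof -
  have vs: "vector_space scale" and bl: "bilinear_product scale p"
    using assms(1) by (auto simp: algebra_over_def)
  interpret v: vector_space scale by (rule vs)
  have addl: "\<And>x y z. p (x + y) z = p x z + p y z"
   and addr: "\<And>x y z. p x (y + z) = p x y + p x z"
   and scl: "\<And>c x y. p (scale c x) y = scale c (p x y)"
   and scr: "\<And>c x y. p x (scale c y) = scale c (p x y)"
    using bl by (auto simp: bilinear_product_def)
  have diffl: "\<And>x y z. p (x - y) z = p x z - p y z"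
    by (metis addl add_diff_cancel eq_diff_eq)
  have diffr: "\<And>x y z. p x (y - z) = p x y - p x z"
    by (metis addr add_diff_cancel eq_diff_eq)
  have na: "\<And>x y z. p x (p y z) = p (p z x) y"
    using assms(2) by (auto simp: nearly_associative_def)
  have "bilinear_product scale (commutator p)"
    unfolding bilinear_product_def commutator_def
    by (auto simp: addl addr scl scr v.scale_right_diff_distrib)
  moreover have "\<forall>x. commutator p x x = 0" by (simp add: commutator_def)
  moreover have "\<forall>x y z. commutator p x (commutator p y z) + commutator p y (commutator p z x)
      + commutator p z (commutator p x y) = 0"
    by (simp add: commutator_def diffl diffr na algebra_simps)
  ultimately show ?thesis using vs
    by (simp add: lie_admissible_def lie_algebra_def)
qed

end
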